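(* Assume the setting and Algorithm 1 described in the context, with $u_k$ $\mu$-strongly concave, and let $\lambda^*$ be a minimizer of $\varphi$ over $\mathbb{R}^m_+$. Then the iterates of Algorithm 1 started from any $\lambda^0\in\mathbb{R}^m_+$ satisfy, for all $t\ge 0$, $$\|z^t-\lambda^*\|_2\le\|\lambda^0-\lambda^*\|_2,\qquad \|y^t-\lambda^*\|_2\le\|\lambda^0-\lambda^*\|_2,\qquad \|\lambda^t-\lambda^*\|_2\le\|\lambda^0-\lambda^*\|_2 .$$
   Context: Setting: $m$ links, $n$ users, routing matrix $C\in\{0,1\}^{m\times n}$ with nonzero columns $C_k$, capacities $b\in\mathbb{R}^m$ with positive entries, utilities $u_k:\mathbb{R}_+\to\mathbb{R}$, $U(x)=\sum_k u_k(x_k)$. For $\lambda\in\mathbb{R}^m_+$: $x_k(\lambda)=\arg\max_{x_k\ge0}\{u_k(x_k)-x_k\langle\lambda,C_k\rangle\}$, $x(\lambda)=(x_k(\lambda))_k$, dual function $\varphi(\lambda)=\langle\lambda,b\rangle+\sum_k(u_k(x_k(\lambda))-x_k(\lambda)\langle\lambda,C_k\rangle)$. When each $u_k$ is $\mu$-strongly concave, $\varphi$ is convex and differentiable on $\mathbb{R}^m_+$ with $\nabla\varphi(\lambda)=b-Cx(\lambda)$, and $\nabla\varphi$ is $L$-Lipschitz with $L=nm^2/\mu$. $[\cdot]_+$ denotes componentwise positive part (projection onto $\mathbb{R}^m_+$). Algorithm 1 (primal-dual fast gradient method): coefficients $\alpha_t=\frac{t+1}{2}$, $A_t=\sum_{j=0}^t\alpha_j=\frac{(t+1)(t+2)}{4}$,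 $\tau_t=\frac{\alpha_{t+1}}{A_{t+1}}=\frac{2}{t+3}$. Given a starting point $\lambda^0\in\mathbb{R}^m_+$, for $t=0,1,\dots$: $y^t=[\lambda^t-\tfrac1L\nabla\varphi(\lambda^t)]_+$, $z^t=[\lambda^0-\tfrac1L\sum_{j=0}^t\alpha_j\nabla\varphi(\lambda^j)]_+$, $\lambda^{t+1}=\tau_t z^t+(1-\tau_t)y^t$. *)

theory Defs
  imports "HOL-Analysis.Analysis"
begin

text \<open>Links are indexed by a finite type 'm (m = CARD('m)), users by a finite type 'n
  (n = CARD('n)). Dual variables live in real^'m, the routing matrix is real^'n^'m,
  C_k = column k C.\<close>

definition strongly_concave_on :: "real set \<Rightarrow> real \<Rightarrow> (real \<Rightarrow> real) \<Rightarrow> bool" where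
  "strongly_concave_on S \<mu> f \<longleftrightarrow>
     (\<forall>x\<in>S. \<forall>y\<in>S. \<forall>t::real. 0 \<le> t \<and> t \<le> 1 \<longrightarrow>
        t * f x + (1 - t) * f y + \<mu> / 2 * t * (1 - t) * (x - y)\<^sup>2 \<le> f (t * x + (1 - t) * y))"

definition xk :: "('n \<Rightarrow> real \<Rightarrow> real) \<Rightarrow> real^'n^'m \<Rightarrow> 'n \<Rightarrow> real^'m \<Rightarrow> real" where
  "xk u C k lam = arg_max (\<lambda>x. u k x - x * (lam \<bullet> column k C)) (\<lambda>x. 0 \<le> x)"

definition xvec :: "('n \<Rightarrow> real \<Rightarrow> real) \<Rightarrow> real^'n^'m \<Rightarrow> real^'m \<Rightarrow> real^'n" where
  "xvec u C lam = (\<chi> k. xk u C k lam)"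

definition dual_fun :: "('n::finite \<Rightarrow> real \<Rightarrow> real) \<Rightarrow> real^'n^'m \<Rightarrow> real^'m \<Rightarrow> real^'m \<Rightarrow> real" where
  "dual_fun u C b lam = lam \<bullet> b +
     (\<Sum>k\<in>UNIV. u k (xk u C k lam) - xk u C k lam * (lam \<bullet> column k C))"

definition dual_grad :: "('n::finite \<Rightarrow> real \<Rightarrow> real) \<Rightarrow> real^'n^'m \<Rightarrow> real^'m \<Rightarrow> real^'m \<Rightarrow> real^'m" where
  "dual_grad u C b lam = b - C *v xvec u C lam"

definition pos_part :: "real^'m \<Rightarrow> real^'m" where
  "pos_part v = (\<chi> i. max (v $ i) 0)"

definition nonneg_vec :: "real^'m \<Rightarrow> bool" where
  "nonneg_vec v \<longleftrightarrow> (\<forall>i. 0 \<le> v $ i)"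

end

theory Submission
  imports Defs
begin

lemma pos_part_nonneg: "nonneg_vec (pos_part v)"
  by (simp add: nonneg_vec_def pos_part_def)

lemma proj_ineq:
  assumes "nonneg_vec w"
  shows "(v - pos_part v) \<bullet> (w - pos_part v) \<le> 0"
proof -
  have "\<And>i. (v$i - max (v$i) 0) * (w$i - max (v$i) 0) \<le> 0"
  proof -
    fix i
    have "0 \<le> w$i" using assms by (simp add: nonneg_vec_def)
    then show "(v$i - max (v$i) 0) * (w$i - max (v$i) 0) \<le> 0"
      by (cases "0 \<le> v$i") (auto simp: mult_nonpos_nonneg)
  qed
  then show ?thesis unfolding inner_vec_def pos_part_def
    by (simp add: sum_nonpos)
qed

lemma nonneg_comb:
  assumes "nonneg_vec a" "nonneg_vec b" "0 \<le> t" "t \<le> 1"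
  shows "nonneg_vec (t *\<^sub>R a + (1 - t) *\<^sub>R b)"
  using assms by (simp add: nonneg_vec_def)

lemma lemQ:
  fixes a s w :: "real^'m"
  assumes L: "0 < L" and w: "nonneg_vec w" and z: "z = pos_part (a - (1/L) *\<^sub>R s)"
  shows "L/2 * (norm (z - a))\<^sup>2 + s \<bullet> z + L/2 * (norm (w - z))\<^sup>2 \<le> L/2 * (norm (w - a))\<^sup>2 + s \<bullet> w"
proof -
  define d where "d = w - z"
  define e where "e = z - a"
  have h: "(a - (1/L) *\<^sub>R s - z) \<bullet> (w - z) \<le> 0"
    using proj_ineq[OF w, of "a - (1/L) *\<^sub>R s"] z by simp
  have "a - (1/L) *\<^sub>R s - z = - e - (1/L) *\<^sub>R s" by (simp add: e_def)
  with h have h2: "- (e \<bullet> d) - (1/L) * (s \<bullet> d) \<le> 0"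
    by (simp add: d_def inner_diff_left)
  have h3: "0 \<le> L * (e \<bullet> d) + s \<bullet> d"
  proof -
    have "L * (- (e \<bullet> d) - (1/L) * (s \<bullet> d)) \<le> 0" using h2 L by (intro mult_nonneg_nonpos) auto
    then show ?thesis using L by (simp add: algebra_simps)
  qed
  have wa: "w - a = d + e" by (simp add: d_def e_def)
  have n1: "(norm (w - a))\<^sup>2 = d \<bullet> d + 2 * (e \<bullet> d) + e \<bullet> e"
    unfolding wa power2_norm_eq_inner by (simp add: inner_add inner_commute)
  have sw: "s \<bullet> w = s \<bullet> z + s \<bullet> d" by (simp add: d_def inner_diff_right)
  have zn: "(norm (z - a))\<^sup>2 = e \<bullet> e" "(norm (w - z))\<^sup>2 = d \<bullet> d"
    by (simp_all add: power2_norm_eq_inner d_def e_def)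
  have "d \<bullet> e = e \<bullet> d" by (simp add: inner_commute)
  show ?thesis unfolding n1 sw zn using h3 by (simp add: field_simps)
qed

lemma model_lemma:
  fixes phi :: "real^'m \<Rightarrow> real" and g :: "real^'m \<Rightarrow> real^'m"
  assumes L: "0 < L"
    and UB: "\<And>a b. phi b \<le> phi a + g a \<bullet> (b - a) + L/2 * (norm (b - a))\<^sup>2"
    and v: "nonneg_vec v"
  shows "phi (pos_part (l - (1/L) *\<^sub>R g l)) \<le> phi l + g l \<bullet> (v - l) + L/2 * (norm (v - l))\<^sup>2"
proof -
  define y where "y = pos_part (l - (1/L) *\<^sub>R g l)"
  have q: "L/2 * (norm (y - l))\<^sup>2 + g l \<bullet> y + L/2 * (norm (v - y))\<^sup>2 \<le> L/2 * (norm (v - l))\<^sup>2 + g l \<bullet> v"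
    by (rule lemQ[OF L v y_def])
  have "0 \<le> L/2 * (norm (v - y))\<^sup>2" using L by simp
  moreover have "phi y \<le> phi l + g l \<bullet> (y - l) + L/2 * (norm (y - l))\<^sup>2" by (rule UB)
  ultimately show ?thesis using q unfolding y_def[symmetric] by (simp add: inner_diff_right)
qed

lemma ystep_lemma:
  fixes phi :: "real^'m \<Rightarrow> real" and g :: "real^'m \<Rightarrow> real^'m"
  assumes L: "0 < L"
    and LB: "\<And>a b. phi a + g a \<bullet> (b - a) \<le> phi b"
    and UB: "\<And>a b. phi b \<le> phi a + g a \<bullet> (b - a) + L/2 * (norm (b - a))\<^sup>2"
    and sn: "nonneg_vec ls" and smin: "\<forall>l. nonneg_vec l \<longrightarrow> phi ls \<le> phi l"
  shows "norm (pos_part (l - (1/L) *\<^sub>R g l) - ls) \<le> norm (l - ls)"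
proof -
  define y where "y = pos_part (l - (1/L) *\<^sub>R g l)"
  have q: "L/2 * (norm (y - l))\<^sup>2 + g l \<bullet> y + L/2 * (norm (ls - y))\<^sup>2 \<le> L/2 * (norm (ls - l))\<^sup>2 + g l \<bullet> ls"
    by (rule lemQ[OF L sn y_def])
  have u: "phi y \<le> phi l + g l \<bullet> (y - l) + L/2 * (norm (y - l))\<^sup>2" by (rule UB)
  have lb: "phi l + g l \<bullet> (ls - l) \<le> phi ls" by (rule LB)
  have "phi ls \<le> phi y" using smin pos_part_nonneg y_def by blast
  then have "L/2 * (norm (ls - y))\<^sup>2 \<le> L/2 * (norm (ls - l))\<^sup>2"
    using q u lb by (simp add: inner_diff_right)
  then have "(norm (ls - y))\<^sup>2 \<le> (norm (ls - l))\<^sup>2" using L by simp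
  then have "norm (ls - y) \<le> norm (ls - l)" by (rule power2_le_imp_le) simp
  then show ?thesis unfolding y_def[symmetric] by (simp add: norm_minus_commute)
qed

lemma abstract_thm:
  fixes phi :: "real^'m \<Rightarrow> real" and g :: "real^'m \<Rightarrow> real^'m"
    and lam y z :: "nat \<Rightarrow> real^'m"
  assumes L: "0 < L"
    and LB: "\<And>a b. phi a + g a \<bullet> (b - a) \<le> phi b"
    and UB: "\<And>a b. phi b \<le> phi a + g a \<bullet> (b - a) + L/2 * (norm (b - a))\<^sup>2"
    and sn: "nonneg_vec ls" and smin: "\<forall>l. nonneg_vec l \<longrightarrow> phi ls \<le> phi l"
    and init: "lam 0 = lam0"
    and y_def: "\<forall>t. y t = pos_part (lam t - (1 / L) *\<^sub>R g (lam t))"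
    and z_def: "\<forall>t. z t = pos_part (lam0 - (1 / L) *\<^sub>R
                   (\<Sum>j\<le>t. ((real j + 1) / 2) *\<^sub>R g (lam j)))"
    and step: "\<forall>t. lam (Suc t) = (2 / (real t + 3)) *\<^sub>R z t + (1 - 2 / (real t + 3)) *\<^sub>R y t"
  shows "\<forall>t. norm (z t - ls) \<le> norm (lam0 - ls)
            \<and> norm (y t - ls) \<le> norm (lam0 - ls)
            \<and> norm (lam t - ls) \<le> norm (lam0 - ls)"
proof -
  define al where "al j = (real j + 1) / 2" for j :: nat
  define A where "A t = (real t + 1) * (real t + 2) / 4" for t :: nat
  define S where "S t = (\<Sum>j\<le>t. al j *\<^sub>R g (lam j))" for t
  define psi where "psi t w = L/2 * (norm (w - lam0))\<^sup>2 + (\<Sum>j\<le>t. al j * (phi (lam j) + g (lam j) \<bullet> (w - lam j)))" for t w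
  have zS: "z t = pos_part (lam0 - (1/L) *\<^sub>R S t)" for t
    using z_def by (simp add: S_def al_def)
  have sumA: "(\<Sum>j\<le>t. al j) = A t" for t
    by (induction t) (simp_all add: al_def A_def field_simps)
  have Apos: "0 \<le> A t" for t by (simp add: A_def)
  have alpos: "0 \<le> al j" for j by (simp add: al_def)
  have psi_alt: "psi t w = L/2 * (norm (w - lam0))\<^sup>2 + S t \<bullet> w + (\<Sum>j\<le>t. al j * (phi (lam j) - g (lam j) \<bullet> lam j))" for t w
  proof -
    have "(\<Sum>j\<le>t. al j * (phi (lam j) + g (lam j) \<bullet> (w - lam j))) =
       (\<Sum>j\<le>t. al j * (g (lam j) \<bullet> w) + al j * (phi (lam j) - g (lam j) \<bullet> lam j))"
      by (rule sum.cong) (simp_all add: inner_diff_right algebra_simps)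
    also have "\<dots> = S t \<bullet> w + (\<Sum>j\<le>t. al j * (phi (lam j) - g (lam j) \<bullet> lam j))"
      unfolding S_def by (simp add: sum.distrib inner_sum_left)
    finally show ?thesis unfolding psi_def by simp
  qed
  have F: "psi t (z t) + L/2 * (norm (w - z t))\<^sup>2 \<le> psi t w" if "nonneg_vec w" for t w
    using lemQ[OF L that zS[of t]] unfolding psi_alt by simp
  have psi_star: "psi t ls \<le> L/2 * (norm (ls - lam0))\<^sup>2 + A t * phi ls" for t
  proof -
    have "(\<Sum>j\<le>t. al j * (phi (lam j) + g (lam j) \<bullet> (ls - lam j))) \<le> (\<Sum>j\<le>t. al j * phi ls)"
      by (rule sum_mono) (use LB alpos in \<open>simp add: mult_left_mono\<close>)
    also have "\<dots> = A t * phi ls" by (simp flip: sum_distrib_right sumA)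
    finally show ?thesis unfolding psi_def by simp
  qed
  have yn: "nonneg_vec (y t)" for t using y_def pos_part_nonneg by metis
  have zn: "nonneg_vec (z t)" for t using z_def pos_part_nonneg by metis
  have Mod: "phi (y t) \<le> phi (lam t) + g (lam t) \<bullet> (v - lam t) + L/2 * (norm (v - lam t))\<^sup>2"
    if "nonneg_vec v" for t v
    using model_lemma[OF L UB that, of "lam t"] y_def by simp
  have I: "A t * phi (y t) \<le> psi t (z t)" for t
  proof (induction t)
    case 0
    have "phi (y 0) \<le> phi lam0 + g lam0 \<bullet> (z 0 - lam0) + L/2 * (norm (z 0 - lam0))\<^sup>2"
      using Mod[OF zn, of 0 0] init by simp
    moreover have "0 \<le> L/2 * (norm (z 0 - lam0))\<^sup>2" using L by simp
    ultimately show ?case unfolding psi_def A_def al_def using init by (simp add: field_simps)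
  next
    case (Suc t)
    define w where "w = z (Suc t)"
    define l1 where "l1 = lam (Suc t)"
    define \<tau> where "\<tau> = 2 / (real t + 3)"
    define v where "v = \<tau> *\<^sub>R w + (1 - \<tau>) *\<^sub>R y t"
    define D where "D = (norm (w - z t))\<^sup>2"
    define P where "P = g l1 \<bullet> (w - z t)"
    have tau: "0 \<le> \<tau>" "\<tau> \<le> 1" by (simp_all add: \<tau>_def)
    have vn: "nonneg_vec v" unfolding v_def w_def by (rule nonneg_comb[OF zn yn tau])
    have l1e: "l1 = \<tau> *\<^sub>R z t + (1 - \<tau>) *\<^sub>R y t" using step by (simp add: l1_def \<tau>_def)
    have vl: "v - l1 = \<tau> *\<^sub>R (w - z t)" unfolding v_def l1e by (simp add: algebra_simps)
    have AS: "A (Suc t) = A t + al (Suc t)" by (simp add: A_def al_def field_simps)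
    have Atau: "A (Suc t) * \<tau> = al (Suc t)" "A (Suc t) * (1 - \<tau>) = A t"
      by (simp_all add: A_def al_def \<tau>_def field_simps)
    have Atau2: "A (Suc t) * \<tau>\<^sup>2 \<le> 1"
      by (simp add: A_def \<tau>_def power2_eq_square divide_simps) (simp add: algebra_simps)
    have vecid: "A t *\<^sub>R (y t - l1) + al (Suc t) *\<^sub>R (w - l1) = al (Suc t) *\<^sub>R (w - z t)"
    proof -
      have "A (Suc t) *\<^sub>R l1 = al (Suc t) *\<^sub>R z t + A t *\<^sub>R y t"
        unfolding l1e by (simp add: scaleR_add_right Atau[symmetric])
      then have "A t *\<^sub>R y t + al (Suc t) *\<^sub>R w - (A t + al (Suc t)) *\<^sub>R l1 = al (Suc t) *\<^sub>R (w - z t)"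
        by (simp add: AS algebra_simps)
      then show ?thesis by (simp add: algebra_simps)
    qed
    have scid: "A t * (g l1 \<bullet> (y t - l1)) + al (Suc t) * (g l1 \<bullet> (w - l1)) = al (Suc t) * P"
      using arg_cong[OF vecid, of "\<lambda>x. g l1 \<bullet> x"] unfolding P_def
      by (simp add: inner_add_right)
    have lbt: "phi l1 + g l1 \<bullet> (y t - l1) \<le> phi (y t)" by (rule LB)
    have Ft: "psi t (z t) + L/2 * D \<le> psi t w" using F[OF zn] unfolding D_def w_def by simp
    have psiS: "psi (Suc t) w = psi t w + al (Suc t) * (phi l1 + g l1 \<bullet> (w - l1))"
      unfolding psi_def l1_def by simp
    have lower: "A (Suc t) * phi l1 + al (Suc t) * P + L/2 * D \<le> psi (Suc t) w"
    proof -
      have "A t * (phi l1 + g l1 \<bullet> (y t - l1)) \<le> A t * phi (y t)"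
        using lbt Apos by (simp add: mult_left_mono)
      then show ?thesis using Suc.IH Ft psiS scid AS by (simp add: algebra_simps)
    qed
    have ml: "phi (y (Suc t)) \<le> phi l1 + g l1 \<bullet> (v - l1) + L/2 * (norm (v - l1))\<^sup>2"
      using Mod[OF vn, of "Suc t"] l1_def by simp
    have e1: "g l1 \<bullet> (v - l1) = \<tau> * P" unfolding vl P_def by simp
    have e2: "(norm (v - l1))\<^sup>2 = \<tau>\<^sup>2 * D" unfolding vl D_def by (simp add: power_mult_distrib)
    have "A (Suc t) * phi (y (Suc t)) \<le> A (Suc t) * (phi l1 + \<tau> * P + L/2 * (\<tau>\<^sup>2 * D))"
      using ml e1 e2 Apos by (simp add: mult_left_mono)
    also have "\<dots> = A (Suc t) * phi l1 + al (Suc t) * P + (A (Suc t) * \<tau>\<^sup>2) * (L/2 * D)"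
    proof -
      have "A (Suc t) * (\<tau> * P) = al (Suc t) * P" by (simp add: mult.assoc flip: Atau(1))
      then show ?thesis by (simp add: algebra_simps)
    qed
    also have "\<dots> \<le> A (Suc t) * phi l1 + al (Suc t) * P + L/2 * D"
    proof -
      have "0 \<le> L/2 * D" using L by (simp add: D_def)
      then have "(A (Suc t) * \<tau>\<^sup>2) * (L/2 * D) \<le> 1 * (L/2 * D)"
        using Atau2 by (intro mult_right_mono) auto
      then show ?thesis by simp
    qed
    also have "\<dots> \<le> psi (Suc t) w" by (rule lower)
    finally show ?case unfolding w_def .
  qed
  have zb: "norm (z t - ls) \<le> norm (lam0 - ls)" for t
  proof -
    have "psi t (z t) + L/2 * (norm (ls - z t))\<^sup>2 \<le> psi t ls" by (rule F[OF sn])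
    moreover have "A t * phi ls \<le> A t * phi (y t)" using smin yn Apos by (simp add: mult_left_mono)
    ultimately have "L/2 * (norm (ls - z t))\<^sup>2 \<le> L/2 * (norm (ls - lam0))\<^sup>2"
      using psi_star[of t] I[of t] by simp
    then have "(norm (ls - z t))\<^sup>2 \<le> (norm (ls - lam0))\<^sup>2" using L by simp
    then have "norm (ls - z t) \<le> norm (ls - lam0)" by (rule power2_le_imp_le) simp
    then show ?thesis by (simp add: norm_minus_commute)
  qed
  have yl: "norm (y t - ls) \<le> norm (lam t - ls)" for t
    using ystep_lemma[OF L LB UB sn smin, of "lam t"] y_def by simp
  have lb: "norm (lam t - ls) \<le> norm (lam0 - ls)" for t
  proof (induction t)
    case 0 then show ?case using init by simp
  next
    case (Suc t)
    define \<tau> where "\<tau> = 2 / (real t + 3)"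
    have tau: "0 \<le> \<tau>" "\<tau> \<le> 1" by (simp_all add: \<tau>_def)
    have "lam (Suc t) - ls = \<tau> *\<^sub>R (z t - ls) + (1 - \<tau>) *\<^sub>R (y t - ls)"
      using step by (simp add: \<tau>_def algebra_simps)
    then have "norm (lam (Suc t) - ls) \<le> \<tau> * norm (z t - ls) + (1 - \<tau>) * norm (y t - ls)"
      using tau by (metis (no_types, lifting) abs_of_nonneg diff_ge_0_iff_ge norm_scaleR norm_triangle_ineq)
    also have "\<dots> \<le> \<tau> * norm (lam0 - ls) + (1 - \<tau>) * norm (lam0 - ls)"
      using zb[of t] yl[of t] Suc.IH tau by (intro add_mono mult_left_mono) auto
    finally show ?case by (simp add: algebra_simps)
  qed
  show ?thesis using zb yl lb by (meson order_trans)
qed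


lemma small_le0:
  fixes a c :: real
  assumes "\<And>t. 0 < t \<Longrightarrow> t \<le> 1 \<Longrightarrow> a \<le> t * c"
  shows "a \<le> 0"
proof (rule ccontr)
  assume a: "\<not> a \<le> 0"
  show False
  proof (cases "c \<le> 0")
    case True then show False using assms[of 1] a by simp
  next
    case False
    define t where "t = min 1 (a / (2*c))"
    have t: "0 < t" "t \<le> 1" using a False by (auto simp: t_def)
    have "t * c \<le> (a / (2*c)) * c" using False by (intro mult_right_mono) (auto simp: t_def)
    also have "\<dots> = a / 2" using False by simp
    finally show False using assms[OF t] a by simp
  qed
qed

lemma exists_max:
  fixes f :: "real \<Rightarrow> real"
  assumes cont: "continuous_on {0..} f" and conc: "strongly_concave_on {0..} \<mu> f" and mu: "0 < \<mu>"
  shows "\<exists>x\<ge>0. \<forall>y\<ge>0. f y - y * p \<le> f x - x * p"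
proof -
  define h where "h y = f y - y * p" for y
  have bound: "h x \<le> h 0 + x * (h 1 - h 0) - \<mu>/2 * x * (x - 1)" if x: "1 \<le> x" for x
  proof -
    have "(1/x) * f x + (1 - 1/x) * f 0 + \<mu>/2 * (1/x) * (1 - 1/x) * (x - 0)\<^sup>2 \<le> f ((1/x) * x + (1 - 1/x) * 0)"
    proof -
      have "\<forall>a\<in>{0..}. \<forall>b\<in>{0..}. \<forall>t::real. 0 \<le> t \<and> t \<le> 1 \<longrightarrow>
        t * f a + (1 - t) * f b + \<mu> / 2 * t * (1 - t) * (a - b)\<^sup>2 \<le> f (t * a + (1 - t) * b)"
        using conc unfolding strongly_concave_on_def by blast
      moreover have "x \<in> {0..}" "(0::real) \<in> {0..}" "0 \<le> 1/x" "1/x \<le> 1" using x by auto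
      ultimately show ?thesis by blast
    qed
    then have "(1/x) * f x + (1 - 1/x) * f 0 + \<mu>/2 * (1/x) * (1 - 1/x) * x\<^sup>2 \<le> f 1" using x by simp
    moreover have "(1/x) * (1 - 1/x) * x\<^sup>2 = x - 1" using x by (simp add: field_simps power2_eq_square)
    ultimately have i1: "(1/x) * f x + (1 - 1/x) * f 0 + \<mu>/2 * (x - 1) \<le> f 1"
      by (metis mult.assoc)
    have i2: "f x + (x-1)*f 0 + \<mu>/2*(x-1)*x = x * ((1/x) * f x + (1 - 1/x) * f 0 + \<mu>/2 * (x - 1))"
      using x by (simp add: field_simps)
    have "x * ((1/x) * f x + (1 - 1/x) * f 0 + \<mu>/2 * (x - 1)) \<le> x * f 1"
      using x i1 by (intro mult_left_mono) auto
    then have "f x + (x - 1) * f 0 + \<mu>/2 * (x - 1) * x \<le> x * f 1" using i2 by simp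
    then show ?thesis unfolding h_def by (simp add: algebra_simps)
  qed
  define R where "R = 1 + 2 * \<bar>h 1 - h 0\<bar> / \<mu>"
  have R1: "1 \<le> R" using mu by (simp add: R_def)
  have hc: "continuous_on {0..R} h" unfolding h_def
    by (intro continuous_intros continuous_on_subset[OF cont]) auto
  obtain x where x: "x \<in> {0..R}" "\<forall>y\<in>{0..R}. h y \<le> h x"
    using continuous_attains_sup[OF compact_Icc _ hc] R1 by auto
  have "h y \<le> h x" if y: "0 \<le> y" for y
  proof (cases "y \<le> R")
    case True then show ?thesis using x y by auto
  next
    case False
    then have y1: "1 \<le> y" using R1 by simp
    have "\<mu>/2 * (y - 1) \<ge> \<mu>/2 * (R - 1)" using False mu by simp
    also have "\<mu>/2 * (R - 1) = \<bar>h 1 - h 0\<bar>" using mu by (simp add: R_def)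
    finally have "h 1 - h 0 - \<mu>/2 * (y - 1) \<le> 0" using abs_ge_self[of "h 1 - h 0"] by linarith
    then have "y * (h 1 - h 0 - \<mu>/2 * (y - 1)) \<le> 0" using y by (simp add: mult_nonneg_nonpos)
    then have "h y \<le> h 0" using bound[OF y1] by (simp add: algebra_simps)
    also have "h 0 \<le> h x" using x R1 by auto
    finally show ?thesis .
  qed
  then show ?thesis using x unfolding h_def by auto
qed

lemma quad_growth:
  fixes f :: "real \<Rightarrow> real"
  assumes conc: "strongly_concave_on {0..} \<mu> f"
    and x: "0 \<le> x" and xmax: "\<forall>y\<ge>0. f y - y * p \<le> f x - x * p" and y: "0 \<le> y"
  shows "f y - y * p \<le> f x - x * p - \<mu>/2 * (y - x)\<^sup>2"
proof -
  have "(f y - y * p) - (f x - x * p) + \<mu>/2 * (y - x)\<^sup>2 \<le> t * (\<mu>/2 * (y - x)\<^sup>2)"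
    if t: "0 < t" "t \<le> 1" for t
  proof -
    have c: "t * f y + (1 - t) * f x + \<mu>/2 * t * (1 - t) * (y - x)\<^sup>2 \<le> f (t * y + (1 - t) * x)"
      using conc x y t unfolding strongly_concave_on_def by auto
    have "0 \<le> t * y + (1 - t) * x" using x y t by simp
    then have m: "f (t * y + (1 - t) * x) - (t * y + (1 - t) * x) * p \<le> f x - x * p" using xmax by blast
    have "t * ((f y - y * p) - (f x - x * p) + \<mu>/2 * (1 - t) * (y - x)\<^sup>2) \<le> t * 0"
      using c m by (simp add: algebra_simps)
    then have "(f y - y * p) - (f x - x * p) + \<mu>/2 * (1 - t) * (y - x)\<^sup>2 \<le> 0"
      using t by (simp add: mult_le_0_iff)
    moreover have "\<mu>/2 * (1 - t) * (y - x)\<^sup>2 = \<mu>/2 * (y - x)\<^sup>2 - t * (\<mu>/2 * (y - x)\<^sup>2)"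
      by (simp add: field_simps)
    ultimately show ?thesis by linarith
  qed
  then have "(f y - y * p) - (f x - x * p) + \<mu>/2 * (y - x)\<^sup>2 \<le> 0"
    by (rule small_le0[of _ "\<mu>/2 * (y - x)\<^sup>2"])
  then show ?thesis by simp
qed

lemma xk_max:
  assumes ucont: "\<forall>k. continuous_on {0..} (u k)"
    and uconc: "\<forall>k. strongly_concave_on {0..} \<mu> (u k)" and mu: "0 < \<mu>"
  shows "0 \<le> xk u C k lam \<and> (\<forall>y\<ge>0. u k y - y * (lam \<bullet> column k C) \<le> u k (xk u C k lam) - xk u C k lam * (lam \<bullet> column k C))"
proof -
  let ?p = "lam \<bullet> column k C"
  obtain x where x: "x \<ge> 0" "\<forall>y\<ge>0. u k y - y * ?p \<le> u k x - x * ?p"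
    using exists_max[of "u k" \<mu> ?p] ucont uconc mu by blast
  show ?thesis unfolding xk_def
    by (rule arg_maxI[where x = x]) (use x in \<open>auto simp: not_less\<close>)
qed

lemma matvec_inner: "(C *v x) \<bullet> v = (\<Sum>k\<in>UNIV. x $ k * (v \<bullet> column k C))"
proof -
  have "(C *v x) \<bullet> v = (\<Sum>i\<in>UNIV. (\<Sum>j\<in>UNIV. C$i$j * x$j) * v$i)"
    by (simp add: inner_vec_def matrix_vector_mult_def)
  also have "\<dots> = (\<Sum>i\<in>UNIV. \<Sum>j\<in>UNIV. C$i$j * x$j * v$i)" by (simp add: sum_distrib_right)
  also have "\<dots> = (\<Sum>j\<in>UNIV. \<Sum>i\<in>UNIV. C$i$j * x$j * v$i)" by (rule sum.swap)
  also have "\<dots> = (\<Sum>k\<in>UNIV. x $ k * (v \<bullet> column k C))"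
    by (simp add: inner_vec_def column_def sum_distrib_left algebra_simps)
  finally show ?thesis .
qed

lemma col_norm:
  fixes C :: "real^'n^'m::finite"
  assumes C01: "\<forall>i k. C $ i $ k \<in> {0, 1::real}"
  shows "(norm (column k C))\<^sup>2 \<le> real CARD('m)"
proof -
  have "(norm (column k C))\<^sup>2 = (\<Sum>i\<in>UNIV. (C $ i $ k)\<^sup>2)"
    unfolding power2_norm_eq_inner inner_vec_def column_def by (simp add: power2_eq_square)
  also have "\<dots> \<le> (\<Sum>i\<in>(UNIV::'m set). 1)"
  proof (rule sum_mono)
    fix i
    have "C$i$k = 0 \<or> C$i$k = 1" using C01 by auto
    then show "(C $ i $ k)\<^sup>2 \<le> 1" by auto
  qed
  finally show ?thesis by simp
qed

lemma dual_bounds: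
  fixes C :: "real^'n::finite^'m::finite"
  assumes C01: "\<forall>i k. C $ i $ k \<in> {0, 1}"
    and mu: "0 < \<mu>"
    and ucont: "\<forall>k. continuous_on {0..} (u k)"
    and uconc: "\<forall>k. strongly_concave_on {0..} \<mu> (u k)"
    and Ldef: "L = real CARD('n) * (real CARD('m))\<^sup>2 / \<mu>"
  shows "dual_fun u C b l + dual_grad u C b l \<bullet> (l' - l) \<le> dual_fun u C b l'"
    and "dual_fun u C b l' \<le> dual_fun u C b l + dual_grad u C b l \<bullet> (l' - l) + L/2 * (norm (l' - l))\<^sup>2"
proof -
  define v where "v = l' - l"
  define X where "X k = xk u C k l" for k
  define X' where "X' k = xk u C k l'" for k
  define G where "G k = u k (X k) - X k * (l \<bullet> column k C)" for k
  define G' where "G' k = u k (X' k) - X' k * (l' \<bullet> column k C)" for k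
  define q where "q k = v \<bullet> column k C" for k
  have pq: "l' \<bullet> column k C = l \<bullet> column k C + q k" for k
    by (simp add: q_def v_def inner_diff_left)
  have mx: "0 \<le> X k \<and> (\<forall>y\<ge>0. u k y - y * (l \<bullet> column k C) \<le> G k)" for k
    using xk_max[OF ucont uconc mu, of C k l] by (simp add: X_def G_def)
  have mx': "0 \<le> X' k \<and> (\<forall>y\<ge>0. u k y - y * (l' \<bullet> column k C) \<le> G' k)" for k
    using xk_max[OF ucont uconc mu, of C k l'] by (simp add: X'_def G'_def)
  have LBk: "G k - X k * q k \<le> G' k" for k
  proof -
    have "u k (X k) - X k * (l' \<bullet> column k C) \<le> G' k" using mx mx' by blast
    then show ?thesis unfolding pq G_def by (simp add: algebra_simps)
  qed
  have UBk: "G' k \<le> G k - X k * q k + (q k)\<^sup>2 / (2 * \<mu>)" for k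
  proof -
    have qg: "u k (X' k) - X' k * (l \<bullet> column k C) \<le> G k - \<mu>/2 * (X' k - X k)\<^sup>2"
      unfolding G_def using quad_growth[where f="u k" and \<mu>=\<mu> and x="X k" and p="l \<bullet> column k C" and y="X' k"] uconc mx mx'
      by (simp add: G_def)
    define d where "d = X' k - X k"
    have sq: "\<mu>/2 * d\<^sup>2 + d * q k + (q k)\<^sup>2 / (2 * \<mu>) = (\<mu> * d + q k)\<^sup>2 / (2 * \<mu>)"
      using mu by (simp add: field_simps power2_eq_square)
    have "0 \<le> (\<mu> * d + q k)\<^sup>2 / (2 * \<mu>)" using mu by simp
    then have "- \<mu>/2 * d\<^sup>2 - d * q k \<le> (q k)\<^sup>2 / (2 * \<mu>)" using sq by linarith
    moreover have "G' k = u k (X' k) - X' k * (l \<bullet> column k C) - X' k * q k"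
      unfolding G'_def pq by (simp add: algebra_simps)
    ultimately show ?thesis using qg unfolding d_def by (simp add: algebra_simps)
  qed
  have df: "dual_fun u C b l = l \<bullet> b + (\<Sum>k\<in>UNIV. G k)"
    by (simp add: dual_fun_def G_def X_def)
  have df': "dual_fun u C b l' = l' \<bullet> b + (\<Sum>k\<in>UNIV. G' k)"
    by (simp add: dual_fun_def G'_def X'_def)
  have dg: "dual_grad u C b l \<bullet> v = b \<bullet> v - (\<Sum>k\<in>UNIV. X k * q k)"
    unfolding dual_grad_def inner_diff_left matvec_inner by (simp add: X_def q_def xvec_def)
  have lb: "l' \<bullet> b = l \<bullet> b + b \<bullet> v" by (simp add: v_def inner_diff_right inner_commute)
  show "dual_fun u C b l + dual_grad u C b l \<bullet> (l' - l) \<le> dual_fun u C b l'"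
  proof -
    have "(\<Sum>k\<in>UNIV. G k - X k * q k) \<le> (\<Sum>k\<in>UNIV. G' k)" by (rule sum_mono) (rule LBk)
    then show ?thesis unfolding df df' v_def[symmetric] dg lb by (simp add: sum_subtractf)
  qed
  have qb: "(q k)\<^sup>2 / (2 * \<mu>) \<le> real CARD('m) * (norm v)\<^sup>2 / (2 * \<mu>)" for k
  proof -
    have "\<bar>q k\<bar> \<le> norm v * norm (column k C)" unfolding q_def by (rule Cauchy_Schwarz_ineq2)
    then have "(q k)\<^sup>2 \<le> (norm v * norm (column k C))\<^sup>2"
      by (metis abs_ge_zero power2_abs power_mono)
    also have "\<dots> = (norm v)\<^sup>2 * (norm (column k C))\<^sup>2" by (simp add: power_mult_distrib)
    also have "\<dots> \<le> (norm v)\<^sup>2 * real CARD('m)" by (rule mult_left_mono[OF col_norm[OF C01]]) simp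
    finally show ?thesis using mu by (simp add: divide_right_mono mult.commute)
  qed
  have sumq: "(\<Sum>k\<in>UNIV. (q k)\<^sup>2 / (2 * \<mu>)) \<le> L/2 * (norm v)\<^sup>2"
  proof -
    have "(\<Sum>k\<in>UNIV. (q k)\<^sup>2 / (2 * \<mu>)) \<le> (\<Sum>k\<in>(UNIV::'n set). real CARD('m) * (norm v)\<^sup>2 / (2 * \<mu>))"
      by (rule sum_mono) (rule qb)
    also have "\<dots> = real CARD('n) * real CARD('m) * (norm v)\<^sup>2 / (2 * \<mu>)" by simp
    also have "\<dots> \<le> real CARD('n) * (real CARD('m))\<^sup>2 * (norm v)\<^sup>2 / (2 * \<mu>)"
    proof -
      have "real CARD('m) \<le> (real CARD('m))\<^sup>2"
      proof -
        have c1: "1 \<le> real CARD('m)" by (simp add: Suc_leI)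
        have "1 * real CARD('m) \<le> real CARD('m) * real CARD('m)"
          by (rule mult_right_mono[OF c1]) simp
        then show ?thesis by (simp add: power2_eq_square)
      qed
      then show ?thesis using mu by (intro divide_right_mono mult_right_mono mult_left_mono) auto
    qed
    also have "\<dots> = L/2 * (norm v)\<^sup>2" using mu by (simp add: Ldef field_simps)
    finally show ?thesis .
  qed
  show "dual_fun u C b l' \<le> dual_fun u C b l + dual_grad u C b l \<bullet> (l' - l) + L/2 * (norm (l' - l))\<^sup>2"
  proof -
    have "(\<Sum>k\<in>UNIV. G' k) \<le> (\<Sum>k\<in>UNIV. G k - X k * q k + (q k)\<^sup>2 / (2 * \<mu>))" by (rule sum_mono) (rule UBk)
    then have "(\<Sum>k\<in>UNIV. G' k) \<le> (\<Sum>k\<in>UNIV. G k) - (\<Sum>k\<in>UNIV. X k * q k) + (\<Sum>k\<in>UNIV. (q k)\<^sup>2 / (2 * \<mu>))"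
      by (simp add: sum.distrib sum_subtractf)
    then show ?thesis unfolding df df' v_def[symmetric] dg lb using sumq by simp
  qed
qed

theorem mainTheorem3:
  fixes C :: "real^'n::finite^'m::finite"
    and b :: "real^'m"
    and u :: "'n \<Rightarrow> real \<Rightarrow> real"
    and \<mu> L :: real
    and lamstar lam0 :: "real^'m"
    and lam y z :: "nat \<Rightarrow> real^'m"
  assumes C01: "\<forall>i k. C $ i $ k \<in> {0, 1}"
    and Ccols: "\<forall>k. column k C \<noteq> 0"
    and bpos: "\<forall>i. 0 < b $ i"
    and mupos: "0 < \<mu>"
    and ucont: "\<forall>k. continuous_on {0..} (u k)"
    and uconc: "\<forall>k. strongly_concave_on {0..} \<mu> (u k)"
    and Ldef: "L = real CARD('n) * (real CARD('m))\<^sup>2 / \<mu>"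
    and star_nonneg: "nonneg_vec lamstar"
    and star_min: "\<forall>l. nonneg_vec l \<longrightarrow> dual_fun u C b lamstar \<le> dual_fun u C b l"
    and lam0_nonneg: "nonneg_vec lam0"
    and init: "lam 0 = lam0"
    and y_def: "\<forall>t. y t = pos_part (lam t - (1 / L) *\<^sub>R dual_grad u C b (lam t))"
    and z_def: "\<forall>t. z t = pos_part (lam0 - (1 / L) *\<^sub>R
                   (\<Sum>j\<le>t. ((real j + 1) / 2) *\<^sub>R dual_grad u C b (lam j)))"
    and step: "\<forall>t. lam (Suc t) = (2 / (real t + 3)) *\<^sub>R z t + (1 - 2 / (real t + 3)) *\<^sub>R y t"
  shows "\<forall>t. norm (z t - lamstar) \<le> norm (lam0 - lamstar)
            \<and> norm (y t - lamstar) \<le> norm (lam0 - lamstar)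
            \<and> norm (lam t - lamstar) \<le> norm (lam0 - lamstar)"
  proof -
  have L: "0 < L" using mupos by (simp add: Ldef)
  show ?thesis
    by (rule abstract_thm[where phi="dual_fun u C b" and g="dual_grad u C b", OF L
          dual_bounds(1)[OF C01 mupos ucont uconc Ldef] dual_bounds(2)[OF C01 mupos ucont uconc Ldef]
          star_nonneg star_min init y_def z_def step])
qed

end
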